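(* Let $\cdot:H\otimes B\to B$ be a symmetric partial action of $H$ on a unital algebra $B$, and consider the partial $H$-module $(B,\pi)$ with $\pi(h)(b)=h\cdot b$ and its standard dilation $((\overline B,T_\pi),\varphi)$. Then: (1) $\overline B\subseteq\operatorname{Hom}_k(H,B)$ is closed under the convolution product $(f*g)(k)=f(k_{(1)})g(k_{(2)})$. With this product and the action $(h\triangleright f)(k)=f(kh)$, it is an idempotent (not necessarily unital) $H$-module algebra, i.e. $h\triangleright(f*g)=(h_{(1)}\triangleright f)*(h_{(2)}\triangleright g)$ and $\overline B*\overline B=\overline B$; (2) $\varphi:B\to\overline B$ is multiplicative; (3) $\varphi(B)$ is an ideal of $\overline B$. Consequently, $(\overline B,\varphi)$ is the globalization (enveloping action) of the partial action on $B$. That is, $\varphi$ is an injective multiplicative map whose image is an ideal of $\overline B$ generating $\overline B$ as an $H$-module, and $\varphi(h\cdot b)=\varphi(1_B)*(h\triangleright\varphi(b))$ for all $h\in H$, $b\in B$.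
   Context: Throughout, $k$ is a field and $H$ is a Hopf algebra over $k$ with bijective antipode $S$ and Sweedler notation $\Delta(h)=h_{(1)}\otimes h_{(2)}$. A symmetric partial action of $H$ on a unital algebra $B$ is a linear map $h\otimes b\mapsto h\cdot b$ such that for all $h,k\in H$, $a,b\in B$: - $1_H\cdot a=a$; - $h\cdot(ab)=(h_{(1)}\cdot a)(h_{(2)}\cdot b)$; - $h\cdot(k\cdot a)=(h_{(1)}\cdot1_B)(h_{(2)}k\cdot a)$; - $h\cdot(k\cdot a)=(h_{(1)}k\cdot a)(h_{(2)}\cdot1_B)$. Standard dilation of a partial $H$-module $(M,\pi)$: $\operatorname{Hom}_k(H,M)$ is a left $H$-module via $(h\triangleright f)(k)=f(kh)$. Set $\varphi(m)(h)=\pi(h)(m)$, let $\overline M=H\triangleright\varphi(M)$ be the $H$-submodule generated by $\varphi(M)$, and $T_\pi(f)=\varphi(f(1_H))$. *)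

theory Defs
  imports Main HOL.Vector_Spaces
begin

(* ---------- finite tensors, Sweedler notation ----------
   An element of H \<otimes> H is represented by a finite list of pairs
   [(a_1,b_1),...,(a_n,b_n)] standing for \<Sum> a_i \<otimes> b_i; similarly H\<otimes>H\<otimes>H by triples.
   Two such lists represent the same tensor iff every k-bilinear (trilinear) form
   takes the same value on them (H\<^sup>* \<otimes> H\<^sup>* separates points of H \<otimes> H). *)

definition bilin_form :: "('k::field \<Rightarrow> 'h::ab_group_add \<Rightarrow> 'h) \<Rightarrow> ('h \<Rightarrow> 'h \<Rightarrow> 'k) \<Rightarrow> bool" where
  "bilin_form s f \<longleftrightarrow>
     (\<forall>y. Vector_Spaces.linear s (*) (\<lambda>x. f x y)) \<and> (\<forall>x. Vector_Spaces.linear s (*) (f x))"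

definition trilin_form :: "('k::field \<Rightarrow> 'h::ab_group_add \<Rightarrow> 'h) \<Rightarrow> ('h \<Rightarrow> 'h \<Rightarrow> 'h \<Rightarrow> 'k) \<Rightarrow> bool" where
  "trilin_form s f \<longleftrightarrow>
     (\<forall>y z. Vector_Spaces.linear s (*) (\<lambda>x. f x y z)) \<and>
     (\<forall>x z. Vector_Spaces.linear s (*) (\<lambda>y. f x y z)) \<and>
     (\<forall>x y. Vector_Spaces.linear s (*) (f x y))"

definition tens2_eq :: "('k::field \<Rightarrow> 'h::ab_group_add \<Rightarrow> 'h) \<Rightarrow> ('h \<times> 'h) list \<Rightarrow> ('h \<times> 'h) list \<Rightarrow> bool" where
  "tens2_eq s D1 D2 \<longleftrightarrow>
     (\<forall>f. bilin_form s f \<longrightarrow>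
        sum_list (map (\<lambda>(x,y). f x y) D1) = sum_list (map (\<lambda>(x,y). f x y) D2))"

definition tens3_eq :: "('k::field \<Rightarrow> 'h::ab_group_add \<Rightarrow> 'h) \<Rightarrow> ('h \<times> 'h \<times> 'h) list \<Rightarrow> ('h \<times> 'h \<times> 'h) list \<Rightarrow> bool" where
  "tens3_eq s D1 D2 \<longleftrightarrow>
     (\<forall>f. trilin_form s f \<longrightarrow>
        sum_list (map (\<lambda>(x,y,z). f x y z) D1) = sum_list (map (\<lambda>(x,y,z). f x y z) D2))"

definition k_algebra :: "('k::field \<Rightarrow> 'a::ring_1 \<Rightarrow> 'a) \<Rightarrow> bool" where
  "k_algebra s \<longleftrightarrow> vector_space s \<and>
     (\<forall>c x y. s c (x * y) = s c x * y \<and> s c (x * y) = x * s c y)"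

definition hopf_algebra ::
  "('k::field \<Rightarrow> 'h::ring_1 \<Rightarrow> 'h) \<Rightarrow> ('h \<Rightarrow> ('h \<times> 'h) list) \<Rightarrow> ('h \<Rightarrow> 'k) \<Rightarrow> ('h \<Rightarrow> 'h) \<Rightarrow> bool" where
  "hopf_algebra s Delta eps S \<longleftrightarrow>
     k_algebra s \<and>
     \<comment> \<open>\<Delta> is k-linear\<close>
     (\<forall>x y. tens2_eq s (Delta (x + y)) (Delta x @ Delta y)) \<and>
     (\<forall>c x. tens2_eq s (Delta (s c x)) (map (\<lambda>(a,b). (s c a, b)) (Delta x))) \<and>
     \<comment> \<open>coassociativity\<close>
     (\<forall>h. tens3_eq s
        (concat (map (\<lambda>(a,b). map (\<lambda>(a1,a2). (a1,a2,b)) (Delta a)) (Delta h)))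
        (concat (map (\<lambda>(a,b). map (\<lambda>(b1,b2). (a,b1,b2)) (Delta b)) (Delta h)))) \<and>
     \<comment> \<open>counit\<close>
     Vector_Spaces.linear s (*) eps \<and>
     (\<forall>h. sum_list (map (\<lambda>(a,b). s (eps a) b) (Delta h)) = h) \<and>
     (\<forall>h. sum_list (map (\<lambda>(a,b). s (eps b) a) (Delta h)) = h) \<and>
     \<comment> \<open>\<Delta> and \<epsilon> are algebra maps\<close>
     (\<forall>x y. tens2_eq s (Delta (x * y))
        (concat (map (\<lambda>(a,b). map (\<lambda>(c,d). (a * c, b * d)) (Delta y)) (Delta x)))) \<and>
     tens2_eq s (Delta 1) [(1,1)] \<and>
     (\<forall>x y. eps (x * y) = eps x * eps y) \<and> eps 1 = 1 \<and>
     \<comment> \<open>bijective antipode\<close>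
     Vector_Spaces.linear s s S \<and> bij S \<and>
     (\<forall>h. sum_list (map (\<lambda>(a,b). S a * b) (Delta h)) = s (eps h) 1) \<and>
     (\<forall>h. sum_list (map (\<lambda>(a,b). a * S b) (Delta h)) = s (eps h) 1)"

definition sym_partial_action ::
  "('k::field \<Rightarrow> 'h::ring_1 \<Rightarrow> 'h) \<Rightarrow> ('k \<Rightarrow> 'b::ring_1 \<Rightarrow> 'b) \<Rightarrow> ('h \<Rightarrow> ('h \<times> 'h) list)
     \<Rightarrow> ('h \<Rightarrow> 'b \<Rightarrow> 'b) \<Rightarrow> bool" where
  "sym_partial_action sH sB Delta act \<longleftrightarrow>
     (\<forall>b. Vector_Spaces.linear sH sB (\<lambda>h. act h b)) \<and>
     (\<forall>h. Vector_Spaces.linear sB sB (act h)) \<and>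
     (\<forall>a. act 1 a = a) \<and>
     (\<forall>h a b. act h (a * b) = sum_list (map (\<lambda>(x,y). act x a * act y b) (Delta h))) \<and>
     (\<forall>h k a. act h (act k a) = sum_list (map (\<lambda>(x,y). act x 1 * act (y * k) a) (Delta h))) \<and>
     (\<forall>h k a. act h (act k a) = sum_list (map (\<lambda>(x,y). act (x * k) a * act y 1) (Delta h)))"

definition hact :: "'h::ring_1 \<Rightarrow> ('h \<Rightarrow> 'b) \<Rightarrow> ('h \<Rightarrow> 'b)" where
  "hact h f = (\<lambda>k. f (k * h))"

definition dphi :: "('h \<Rightarrow> 'b \<Rightarrow> 'b) \<Rightarrow> 'b \<Rightarrow> ('h \<Rightarrow> 'b)" where
  "dphi act b = (\<lambda>h. act h b)"

inductive_set Bbar :: "('k::field \<Rightarrow> 'b::ring_1 \<Rightarrow> 'b) \<Rightarrow> ('h::ring_1 \<Rightarrow> 'b \<Rightarrow> 'b) \<Rightarrow> ('h \<Rightarrow> 'b) set"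
  for sB :: "'k::field \<Rightarrow> 'b::ring_1 \<Rightarrow> 'b" and act :: "'h::ring_1 \<Rightarrow> 'b \<Rightarrow> 'b" where
  gen: "dphi act b \<in> Bbar sB act"
| zero: "(\<lambda>_. 0) \<in> Bbar sB act"
| add: "f \<in> Bbar sB act \<Longrightarrow> g \<in> Bbar sB act \<Longrightarrow> (\<lambda>k. f k + g k) \<in> Bbar sB act"
| scale: "f \<in> Bbar sB act \<Longrightarrow> (\<lambda>k. sB c (f k)) \<in> Bbar sB act"
| hmod: "f \<in> Bbar sB act \<Longrightarrow> hact h f \<in> Bbar sB act"

definition conv :: "('h \<Rightarrow> ('h \<times> 'h) list) \<Rightarrow> ('h \<Rightarrow> 'b::ring_1) \<Rightarrow> ('h \<Rightarrow> 'b) \<Rightarrow> ('h \<Rightarrow> 'b)" where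
  "conv Delta f g = (\<lambda>k. sum_list (map (\<lambda>(a,b). f a * g b) (Delta k)))"

end

theory Submission imports Defs begin

definition lin :: "('k::field \<Rightarrow> 'a::ab_group_add \<Rightarrow> 'a) \<Rightarrow> ('k \<Rightarrow> 'c::ab_group_add \<Rightarrow> 'c) \<Rightarrow> ('a \<Rightarrow> 'c) \<Rightarrow> bool" where
  "lin s1 s2 f \<longleftrightarrow> (\<forall>x y. f (x + y) = f x + f y) \<and> (\<forall>c x. f (s1 c x) = s2 c (f x))"

definition sw :: "('h \<times> 'h) list \<Rightarrow> ('h \<Rightarrow> 'h \<Rightarrow> 'b::monoid_add) \<Rightarrow> 'b" where
  "sw D F = sum_list (map (\<lambda>(x,y). F x y) D)"

lemma vs_k: "vector_space ((*) :: 'k::field \<Rightarrow> 'k \<Rightarrow> 'k)"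
  by unfold_locales (simp_all add: algebra_simps)

lemma linear_lin: "Vector_Spaces.linear s1 s2 f \<Longrightarrow> lin s1 s2 f"
  unfolding lin_def Vector_Spaces.linear_iff by auto

lemma lin_linear: "vector_space s1 \<Longrightarrow> vector_space s2 \<Longrightarrow> lin s1 s2 f \<Longrightarrow> Vector_Spaces.linear s1 s2 f"
  unfolding lin_def Vector_Spaces.linear_iff by auto

lemma lin_add: "lin s1 s2 f \<Longrightarrow> f (x + y) = f x + f y"
  unfolding lin_def by auto
lemma lin_scale: "lin s1 s2 f \<Longrightarrow> f (s1 c x) = s2 c (f x)"
  unfolding lin_def by auto
lemma lin_zero: "lin s1 s2 f \<Longrightarrow> f 0 = 0"
  using lin_add[of s1 s2 f 0 0] by simp

lemma lin_sum_list: "lin s1 s2 f \<Longrightarrow> f (sum_list (map g xs)) = sum_list (map (\<lambda>i. f (g i)) xs)"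
  by (induction xs) (auto simp: lin_zero lin_add)

lemma lin_sw: "lin s1 s2 f \<Longrightarrow> f (sw D F) = sw D (\<lambda>x y. f (F x y))"
  unfolding sw_def by (simp add: lin_sum_list split_def)

lemma lin_comp: "lin s1 s2 f \<Longrightarrow> lin s2 s3 g \<Longrightarrow> lin s1 s3 (\<lambda>x. g (f x))"
  unfolding lin_def by auto

lemma sep:
  fixes u v :: "'b::ab_group_add" and s :: "'k::field \<Rightarrow> 'b \<Rightarrow> 'b"
  assumes vs: "vector_space s" and h: "\<And>l. lin s ((*) :: 'k \<Rightarrow> 'k \<Rightarrow> 'k) l \<Longrightarrow> l u = l v"
  shows "u = v"
proof (rule ccontr)
  assume ne: "u \<noteq> v"
  interpret vp: vector_space_pair s "(*) :: 'k \<Rightarrow> 'k \<Rightarrow> 'k" using vs vs_k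
    by (simp add: vector_space_pair_def)
  have "vp.vs1.independent {u - v}" using ne by simp
  from vp.linear_independent_extend[OF this, of "\<lambda>_. 1"]
  obtain g where g: "Vector_Spaces.linear s (*) g" "\<forall>x\<in>{u - v}. g x = (1::'k)"
    by blast
  have l: "lin s (*) g" using g(1) by (rule linear_lin)
  have "g (u - v) = g u - g v" using lin_add[OF l, of "u - v" v] by simp
  then show False using g(2) h[OF l] by simp
qed


lemma sw_addf: "sw D (\<lambda>x y. (F x y :: 'b::comm_monoid_add) + G x y) = sw D F + sw D G"
  unfolding sw_def by (induction D) (auto simp: algebra_simps)

lemma sw_mult_left: "c * sw D F = sw D (\<lambda>x y. c * (F x y :: 'b::ring))"
  unfolding sw_def by (induction D) (auto simp: algebra_simps)
lemma sw_mult_right: "sw D F * c = sw D (\<lambda>x y. (F x y :: 'b::ring) * c)"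
  unfolding sw_def by (induction D) (auto simp: algebra_simps)

lemma sum_list_mult_left: "c * sum_list (map g xs) = sum_list (map (\<lambda>i. c * (g i :: 'b::ring)) xs)"
  by (induction xs) (auto simp: algebra_simps)
lemma sum_list_mult_right: "sum_list (map g xs) * c = sum_list (map (\<lambda>i. (g i :: 'b::ring) * c) xs)"
  by (induction xs) (auto simp: algebra_simps)

lemma sw_sum_list: "sw D (\<lambda>x y. sum_list (map (\<lambda>i. F i x y) L)) = (sum_list (map (\<lambda>i. sw D (F i)) L) :: 'b::comm_monoid_add)"
  unfolding sw_def
  by (induction D) (auto simp: sum_list_addf)

lemma sw_Nil[simp]: "sw [] F = 0" by (simp add: sw_def)
lemma sw_Cons[simp]: "sw (p # D) F = F (fst p) (snd p) + sw D F" by (simp add: sw_def split_def)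

lemma sw_zero[simp]: "sw D (\<lambda>x y. 0) = (0::'b::monoid_add)"
  by (induction D) simp_all

lemma sw_swap: "sw D1 (\<lambda>a b. sw D2 (\<lambda>c d. G a b c d)) = sw D2 (\<lambda>c d. sw D1 (\<lambda>a b. (G a b c d :: 'b::comm_monoid_add)))"
  by (induction D1) (simp_all add: sw_addf)

lemma sw_cong: "(\<And>x y. (x,y) \<in> set D \<Longrightarrow> F x y = G x y) \<Longrightarrow> sw D F = sw D G"
  unfolding sw_def by (induction D) auto


definition sw3 :: "('h \<times> 'h \<times> 'h) list \<Rightarrow> ('h \<Rightarrow> 'h \<Rightarrow> 'h \<Rightarrow> 'b::monoid_add) \<Rightarrow> 'b" where
  "sw3 D F = sum_list (map (\<lambda>(x,y,z). F x y z) D)"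

locale PA =
  fixes sH :: "'k::field \<Rightarrow> 'h::ring_1 \<Rightarrow> 'h"
    and sB :: "'k \<Rightarrow> 'b::ring_1 \<Rightarrow> 'b"
    and Delta :: "'h \<Rightarrow> ('h \<times> 'h) list"
    and eps :: "'h \<Rightarrow> 'k" and S :: "'h \<Rightarrow> 'h"
    and act :: "'h \<Rightarrow> 'b \<Rightarrow> 'b"
  assumes H: "hopf_algebra sH Delta eps S"
    and B: "k_algebra sB"
    and P: "sym_partial_action sH sB Delta act"
begin

lemma vsH: "vector_space sH" using H unfolding hopf_algebra_def k_algebra_def by auto
lemma vsB: "vector_space sB" using B unfolding k_algebra_def by auto

lemma kalgH: "k_algebra sH" using H unfolding hopf_algebra_def by auto
lemma multH1: "sH c (x * y) = sH c x * y" using kalgH unfolding k_algebra_def by metis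
lemma multH2: "sH c (x * y) = x * sH c y" using kalgH unfolding k_algebra_def by metis
lemma multB1: "sB c (x * y) = sB c x * y" using B unfolding k_algebra_def by auto
lemma multB2: "sB c (x * y) = x * sB c y" using B unfolding k_algebra_def by metis

lemma lin_rmH: "lin sH sH (\<lambda>x. x * h)" unfolding lin_def by (simp add: distrib_right multH1)
lemma lin_lmH: "lin sH sH (\<lambda>x. h * x)" unfolding lin_def by (simp add: distrib_left multH2)
lemma lin_rmB: "lin sB sB (\<lambda>x. x * h)" unfolding lin_def by (simp add: distrib_right multB1)
lemma lin_lmB: "lin sB sB (\<lambda>x. h * x)" unfolding lin_def by (simp add: distrib_left multB2)
lemma lin_scB: "lin sB sB (sB c)" unfolding lin_def
  using vsB by (simp add: vector_space.vector_space_assms(1) vector_space.vector_space_assms(3) mult.commute)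

lemma linS: "lin sH sH S" using H unfolding hopf_algebra_def by (auto intro: linear_lin)
lemma lineps: "lin sH (*) eps" using H unfolding hopf_algebra_def by (auto intro: linear_lin)
lemma counit1: "sw (Delta h) (\<lambda>a b. sH (eps a) b) = h" using H unfolding hopf_algebra_def sw_def by auto
lemma counit2: "sw (Delta h) (\<lambda>a b. sH (eps b) a) = h" using H unfolding hopf_algebra_def sw_def by auto
lemma antip: "sw (Delta h) (\<lambda>a b. a * S b) = sH (eps h) 1" using H unfolding hopf_algebra_def sw_def by auto

lemma actb: "lin sH sB (\<lambda>h. act h b)" using P unfolding sym_partial_action_def by (auto intro: linear_lin)
lemma acth: "lin sB sB (act h)" using P unfolding sym_partial_action_def by (auto intro: linear_lin)
lemma act1: "act 1 a = a" using P unfolding sym_partial_action_def by auto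
lemma P4: "act h (a * b) = sw (Delta h) (\<lambda>x y. act x a * act y b)"
  using P unfolding sym_partial_action_def sw_def by auto
lemma P5: "act h (act k a) = sw (Delta h) (\<lambda>x y. act x 1 * act (y * k) a)"
  using P unfolding sym_partial_action_def sw_def by auto
lemma P6: "act h (act k a) = sw (Delta h) (\<lambda>x y. act (x * k) a * act y 1)"
  using P unfolding sym_partial_action_def sw_def by auto

lemma T2:
  assumes "tens2_eq sH D1 D2" and "\<And>y. lin sH sB (\<lambda>x. F x y)" and "\<And>x. lin sH sB (F x)"
  shows "sw D1 F = sw D2 F"
proof (rule sep[OF vsB])
  fix l :: "'b \<Rightarrow> 'k" assume l: "lin sB (*) l"
  have bf: "bilin_form sH (\<lambda>x y. l (F x y))"
    unfolding bilin_form_def using assms(2,3) l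
    by (auto intro!: lin_linear[OF vsH vs_k] lin_comp[of sH sB _ "(*)" l])
  have "sw D1 (\<lambda>x y. l (F x y)) = sw D2 (\<lambda>x y. l (F x y))"
    using assms(1) bf unfolding tens2_eq_def sw_def by blast
  then show "l (sw D1 F) = l (sw D2 F)" by (simp add: lin_sw[OF l])
qed


lemma T3:
  assumes "tens3_eq sH D1 D2" and "\<And>y z. lin sH sB (\<lambda>x. F x y z)"
    and "\<And>x z. lin sH sB (\<lambda>y. F x y z)" and "\<And>x y. lin sH sB (F x y)"
  shows "sw3 D1 F = sw3 D2 F"
proof (rule sep[OF vsB])
  fix l :: "'b \<Rightarrow> 'k" assume l: "lin sB (*) l"
  have bf: "trilin_form sH (\<lambda>x y z. l (F x y z))"
    unfolding trilin_form_def using assms(2,3,4) l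
    by (auto intro!: lin_linear[OF vsH vs_k] lin_comp[of sH sB _ "(*)" l])
  have "sw3 D1 (\<lambda>x y z. l (F x y z)) = sw3 D2 (\<lambda>x y z. l (F x y z))"
    using assms(1) bf unfolding tens3_eq_def sw3_def by blast
  then show "l (sw3 D1 F) = l (sw3 D2 F)" unfolding sw3_def by (simp add: lin_sum_list[OF l] split_def)
qed

lemma coassoc:
  assumes "\<And>y z. lin sH sB (\<lambda>x. F x y z)"
    and "\<And>x z. lin sH sB (\<lambda>y. F x y z)" and "\<And>x y. lin sH sB (F x y)"
  shows "sw (Delta h) (\<lambda>a b. sw (Delta a) (\<lambda>a1 a2. F a1 a2 b)) = sw (Delta h) (\<lambda>a b. sw (Delta b) (\<lambda>b1 b2. F a b1 b2))"
proof -
  have e: "tens3_eq sH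
        (concat (map (\<lambda>(a,b). map (\<lambda>(a1,a2). (a1,a2,b)) (Delta a)) (Delta h)))
        (concat (map (\<lambda>(a,b). map (\<lambda>(b1,b2). (a,b1,b2)) (Delta b)) (Delta h)))"
    using H unfolding hopf_algebra_def by blast
  have l: "sw3 (concat (map (\<lambda>(a,b). map (\<lambda>(a1,a2). (a1,a2,b)) (Delta a)) D)) F = sw D (\<lambda>a b. sw (Delta a) (\<lambda>a1 a2. F a1 a2 b))" for D
    unfolding sw3_def sw_def by (induction D) (simp_all add: split_def comp_def)
  have r: "sw3 (concat (map (\<lambda>(a,b). map (\<lambda>(b1,b2). (a,b1,b2)) (Delta b)) D)) F = sw D (\<lambda>a b. sw (Delta b) (\<lambda>b1 b2. F a b1 b2))" for D
    unfolding sw3_def sw_def by (induction D) (simp_all add: split_def comp_def)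
  show ?thesis using T3[OF e assms] l r by simp
qed

lemma multD:
  assumes "\<And>y. lin sH sB (\<lambda>x. F x y)" and "\<And>x. lin sH sB (F x)"
  shows "sw (Delta (x * y)) F = sw (Delta x) (\<lambda>a b. sw (Delta y) (\<lambda>c d. F (a * c) (b * d)))"
proof -
  have e: "tens2_eq sH (Delta (x * y))
        (concat (map (\<lambda>(a,b). map (\<lambda>(c,d). (a * c, b * d)) (Delta y)) (Delta x)))"
    using H unfolding hopf_algebra_def by blast
  have r: "sw (concat (map (\<lambda>(a,b). map (\<lambda>(c,d). (a * c, b * d)) (Delta y)) D)) F = sw D (\<lambda>a b. sw (Delta y) (\<lambda>c d. F (a * c) (b * d)))" for D
    unfolding sw_def by (induction D) (simp_all add: split_def comp_def)
  show ?thesis using T2[OF e assms] r by simp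
qed

end

context PA begin

lemma act_addH: "act (x + y) b = act x b + act y b" using lin_add[OF actb] .
lemma act_scH: "act (sH c x) b = sB c (act x b)" using lin_scale[OF actb] .
lemma act_addB: "act h (x + y) = act h x + act h y" using lin_add[OF acth] .
lemma act_scB: "act h (sB c x) = sB c (act h x)" using lin_scale[OF acth] .
lemma S_add: "S (x + y) = S x + S y" using lin_add[OF linS] .
lemma S_sc: "S (sH c x) = sH c (S x)" using lin_scale[OF linS] .
lemma sB_add: "sB c (x + y) = sB c x + sB c y" using lin_add[OF lin_scB] .
lemma sB_comm: "sB c (sB d x) = sB d (sB c x)"
  using vsB by (simp add: vector_space.vector_space_assms(3) mult.commute)
lemma sw_scB: "sw D (\<lambda>x y. sB c (F x y)) = sB c (sw D F)" using lin_sw[OF lin_scB] by metis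

lemmas linsimps = distrib_left distrib_right act_addH act_scH act_addB act_scB S_add S_sc
  multH1[symmetric] multH2[symmetric] multB1[symmetric] multB2[symmetric] mult.assoc
  sw_addf sw_scB sB_add

definition rep :: "('h \<times> 'b) list \<Rightarrow> 'h \<Rightarrow> 'b" where
  "rep L = (\<lambda>k. sum_list (map (\<lambda>(h,b). act (k * h) b) L))"

lemma conv_sw: "conv Delta f g = (\<lambda>k. sw (Delta k) (\<lambda>a b. f a * g b))"
  by (simp add: conv_def sw_def)

lemma Bbar_rep: "f \<in> Bbar sB act \<Longrightarrow> \<exists>L. f = rep L"
proof (induction rule: Bbar.induct)
  case (gen b) show ?case by (rule exI[of _ "[(1,b)]"]) (simp add: rep_def dphi_def)
next
  case zero show ?case by (rule exI[of _ "[]"]) (simp add: rep_def)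
next
  case (add f g)
  then obtain L1 L2 where "f = rep L1" "g = rep L2" by blast
  then show ?case by (intro exI[of _ "L1 @ L2"]) (simp add: rep_def)
next
  case (scale f c)
  then obtain L where L: "f = rep L" by blast
  show ?case
    by (rule exI[of _ "map (\<lambda>(h,b). (h, sB c b)) L"])
       (simp add: L rep_def lin_sum_list[OF lin_scB] act_scB split_def comp_def)
next
  case (hmod f h)
  then obtain L where L: "f = rep L" by blast
  show ?case
    by (rule exI[of _ "map (\<lambda>(h',b). (h * h', b)) L"])
       (simp add: L rep_def hact_def split_def comp_def mult.assoc)
qed

lemma rep_Bbar: "rep L \<in> Bbar sB act"
proof (induction L)
  case Nil then show ?case using Bbar.zero by (simp add: rep_def)
next
  case (Cons p L)
  have "(\<lambda>k. hact (fst p) (dphi act (snd p)) k + rep L k) \<in> Bbar sB act"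
    by (rule Bbar.add[OF Bbar.hmod[OF Bbar.gen] Cons])
  moreover have "(\<lambda>k. hact (fst p) (dphi act (snd p)) k + rep L k) = rep (p # L)"
    by (simp add: rep_def hact_def dphi_def split_def)
  ultimately show ?case by simp
qed

lemma Bbar_lin: "f \<in> Bbar sB act \<Longrightarrow> lin sH sB f"
proof (induction rule: Bbar.induct)
  case (gen b) then show ?case using actb by (simp add: dphi_def)
next
  case zero then show ?case using lin_zero[OF lin_scB] by (simp add: lin_def)
next
  case (add f g) then show ?case by (simp add: lin_def linsimps)
next
  case (scale f c) then show ?case by (simp add: lin_def linsimps sB_comm)
next
  case (hmod f h) then show ?case by (simp add: lin_def hact_def linsimps)
qed

lemma Bbar_suml: "(\<And>i. i \<in> set L \<Longrightarrow> F i \<in> Bbar sB act) \<Longrightarrow> (\<lambda>k. sum_list (map (\<lambda>i. F i k) L)) \<in> Bbar sB act"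
proof (induction L)
  case Nil then show ?case using Bbar.zero by simp
next
  case (Cons a L)
  have "F a \<in> Bbar sB act" using Cons.prems by simp
  moreover have "(\<lambda>k. sum_list (map (\<lambda>i. F i k) L)) \<in> Bbar sB act" using Cons by simp
  ultimately show ?case using Bbar.add by fastforce
qed

lemma Bbar_sw: "(\<And>x y. F x y \<in> Bbar sB act) \<Longrightarrow> (\<lambda>k. sw D (\<lambda>x y. F x y k)) \<in> Bbar sB act"
proof (induction D)
  case Nil then show ?case using Bbar.zero by simp
next
  case (Cons a D)
  have "F (fst a) (snd a) \<in> Bbar sB act" using Cons.prems by simp
  moreover have "(\<lambda>k. sw D (\<lambda>x y. F x y k)) \<in> Bbar sB act" using Cons by simp
  ultimately show ?case using Bbar.add by fastforce
qed

lemma I1: "act k (a * act h c) = sw (Delta k) (\<lambda>x y. act x a * act (y * h) c)"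
proof -
  have "act k (a * act h c) = sw (Delta k) (\<lambda>x y. act x a * act y (act h c))" by (rule P4)
  also have "\<dots> = sw (Delta k) (\<lambda>x y. sw (Delta y) (\<lambda>y1 y2. act x a * act y1 1 * act (y2 * h) c))"
    by (simp add: P5 sw_mult_left mult.assoc)
  also have "\<dots> = sw (Delta k) (\<lambda>x y. sw (Delta x) (\<lambda>x1 x2. act x1 a * act x2 1 * act (y * h) c))"
    by (rule coassoc[symmetric]) (simp_all add: lin_def linsimps)
  also have "\<dots> = sw (Delta k) (\<lambda>x y. act x a * act (y * h) c)"
    by (simp add: sw_mult_right[symmetric] P4[symmetric])
  finally show ?thesis .
qed

lemma I2: "act k (act h c * b) = sw (Delta k) (\<lambda>x y. act (x * h) c * act y b)"
proof -
  have "act k (act h c * b) = sw (Delta k) (\<lambda>x y. act x (act h c) * act y b)" by (rule P4)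
  also have "\<dots> = sw (Delta k) (\<lambda>x y. sw (Delta x) (\<lambda>x1 x2. act (x1 * h) c * act x2 1 * act y b))"
    by (simp add: P6 sw_mult_right)
  also have "\<dots> = sw (Delta k) (\<lambda>x y. sw (Delta y) (\<lambda>y1 y2. act (x * h) c * act y1 1 * act y2 b))"
    by (rule coassoc) (simp_all add: lin_def linsimps)
  also have "\<dots> = sw (Delta k) (\<lambda>x y. act (x * h) c * act y b)"
    by (simp add: sw_mult_left[symmetric] P4[symmetric] mult.assoc)
  finally show ?thesis .
qed

end

context PA begin

lemma hact_hact: "hact x (hact y f) = hact (x * y) f"
  by (simp add: hact_def mult.assoc)

lemma MA:
  assumes f: "lin sH sB f" and g: "lin sH sB g"
  shows "conv Delta f g (k * h) = sw (Delta h) (\<lambda>x y. conv Delta (hact x f) (hact y g) k)"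
proof -
  have "conv Delta f g (k * h) = sw (Delta (k * h)) (\<lambda>a b. f a * g b)" by (simp add: conv_sw)
  also have "\<dots> = sw (Delta k) (\<lambda>a b. sw (Delta h) (\<lambda>c d. f (a * c) * g (b * d)))"
    by (rule multD) (simp_all add: lin_def linsimps lin_add[OF f] lin_add[OF g] lin_scale[OF f] lin_scale[OF g])
  also have "\<dots> = sw (Delta h) (\<lambda>c d. sw (Delta k) (\<lambda>a b. f (a * c) * g (b * d)))" by (rule sw_swap)
  finally show ?thesis by (simp add: conv_sw hact_def)
qed

lemma AI:
  assumes G1: "\<And>v. lin sH sB (\<lambda>u. G u v)" and G2: "\<And>u. lin sH sB (G u)"
  shows "sw (Delta h) (\<lambda>x1 x'. sw (Delta x') (\<lambda>x2 x3. G x1 (x2 * S x3 * g))) = G h g"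
proof -
  have inner: "sw (Delta x') (\<lambda>x2 x3. G x1 (x2 * S x3 * g)) = G (sH (eps x') x1) g" for x1 x'
  proof -
    have l: "lin sH sB (\<lambda>z. G x1 (z * g))" by (rule lin_comp[OF lin_rmH G2])
    have "sw (Delta x') (\<lambda>x2 x3. G x1 (x2 * S x3 * g)) = G x1 (sw (Delta x') (\<lambda>x2 x3. x2 * S x3) * g)"
      using lin_sw[OF l, of "Delta x'" "\<lambda>x2 x3. x2 * S x3"] by simp
    also have "\<dots> = G x1 (sH (eps x') g)" by (simp add: antip multH1[symmetric])
    also have "\<dots> = sB (eps x') (G x1 g)" by (rule lin_scale[OF G2])
    also have "\<dots> = G (sH (eps x') x1) g" by (rule lin_scale[OF G1, symmetric])
    finally show ?thesis .
  qed
  have "sw (Delta h) (\<lambda>x1 x'. G (sH (eps x') x1) g) = G (sw (Delta h) (\<lambda>x1 x'. sH (eps x') x1)) g"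
    using lin_sw[OF G1, of "Delta h" "\<lambda>x1 x'. sH (eps x') x1"] by simp
  then show ?thesis by (simp add: inner counit2)
qed

lemma conv_dphi_hact: "conv Delta (dphi act a) (hact w (dphi act b)) = dphi act (a * act w b)"
  by (rule ext) (simp add: conv_sw I1 dphi_def hact_def)

lemma lin_dphi: "lin sH sB (dphi act b)" using actb by (simp add: dphi_def)
lemma lin_hact: "lin sH sB f \<Longrightarrow> lin sH sB (hact h f)"
  by (simp add: hact_def lin_def linsimps)

lemma closure_gen: "conv Delta (hact h (dphi act a)) (hact g (dphi act b)) \<in> Bbar sB act"
proof -
  have eq: "conv Delta (hact h (dphi act a)) (hact g (dphi act b))
     = (\<lambda>k. sw (Delta h) (\<lambda>y1 y2. hact y1 (dphi act (a * act (S y2 * g) b)) k))"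
  proof (rule ext)
    fix k
    define G where "G u v = sw (Delta k) (\<lambda>p q. act (p * u) a * act (q * v) b)" for u v
    have G1: "lin sH sB (\<lambda>u. G u v)" for v unfolding G_def by (simp add: lin_def linsimps)
    have G2: "lin sH sB (G u)" for u unfolding G_def by (simp add: lin_def linsimps)
    have "sw (Delta h) (\<lambda>y1 y2. hact y1 (dphi act (a * act (S y2 * g) b)) k)
      = sw (Delta h) (\<lambda>y1 y2. conv Delta (dphi act a) (hact (S y2 * g) (dphi act b)) (k * y1))"
      by (simp only: conv_dphi_hact) (simp add: hact_def)
    also have "\<dots> = sw (Delta h) (\<lambda>y1 y2. sw (Delta y1) (\<lambda>z1 z2. conv Delta (hact z1 (dphi act a)) (hact z2 (hact (S y2 * g) (dphi act b))) k))"
      by (simp add: MA lin_dphi lin_hact)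
    also have "\<dots> = sw (Delta h) (\<lambda>y1 y2. sw (Delta y1) (\<lambda>z1 z2. G z1 (z2 * (S y2 * g))))"
      by (simp add: hact_hact G_def conv_sw hact_def dphi_def mult.assoc)
    also have "\<dots> = sw (Delta h) (\<lambda>x1 x'. sw (Delta x') (\<lambda>x2 x3. G x1 (x2 * (S x3 * g))))"
      by (rule coassoc) (simp_all add: G_def lin_def linsimps)
    also have "\<dots> = G h g" using AI[OF G1 G2, of h g] by (simp add: mult.assoc)
    finally show "conv Delta (hact h (dphi act a)) (hact g (dphi act b)) k
      = sw (Delta h) (\<lambda>y1 y2. hact y1 (dphi act (a * act (S y2 * g) b)) k)"
      by (simp add: G_def conv_sw hact_def dphi_def)
  qed
  show ?thesis unfolding eq by (rule Bbar_sw) (rule Bbar.hmod[OF Bbar.gen])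
qed

end

context PA begin

lemma rep_alt: "rep L k = sum_list (map (\<lambda>i. hact (fst i) (dphi act (snd i)) k) L)"
  by (simp add: rep_def split_def hact_def dphi_def)

lemma closure: assumes "f \<in> Bbar sB act" "g \<in> Bbar sB act" shows "conv Delta f g \<in> Bbar sB act"
proof -
  obtain L1 L2 where L: "f = rep L1" "g = rep L2" using Bbar_rep assms by blast
  have "conv Delta (rep L1) (rep L2) = (\<lambda>k. sum_list (map (\<lambda>j. sum_list (map (\<lambda>i.
     conv Delta (hact (fst i) (dphi act (snd i))) (hact (fst j) (dphi act (snd j))) k) L1)) L2))"
    by (rule ext) (simp add: conv_sw rep_alt sum_list_mult_right sum_list_mult_left sw_sum_list)
  also have "\<dots> \<in> Bbar sB act"
    by (intro Bbar_suml closure_gen)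
  finally show ?thesis using L by simp
qed

lemma assoc:
  assumes f: "lin sH sB f" and g: "lin sH sB g" and h: "lin sH sB h"
  shows "conv Delta (conv Delta f g) h = conv Delta f (conv Delta g h)"
proof (rule ext)
  fix k
  have "conv Delta (conv Delta f g) h k = sw (Delta k) (\<lambda>x y. sw (Delta x) (\<lambda>a b. f a * g b * h y))"
    by (simp add: conv_sw sw_mult_right)
  also have "\<dots> = sw (Delta k) (\<lambda>x y. sw (Delta y) (\<lambda>a b. f x * g a * h b))"
    by (rule coassoc) (simp_all add: lin_def linsimps lin_add[OF f] lin_add[OF g] lin_add[OF h]
        lin_scale[OF f] lin_scale[OF g] lin_scale[OF h])
  also have "\<dots> = conv Delta f (conv Delta g h) k"
    by (simp add: conv_sw sw_mult_left mult.assoc)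
  finally show "conv Delta (conv Delta f g) h k = conv Delta f (conv Delta g h) k" .
qed

lemma ideal_left: "conv Delta (dphi act b) (rep L) = dphi act (sum_list (map (\<lambda>i. b * act (fst i) (snd i)) L))"
proof (rule ext)
  fix k
  have "dphi act (sum_list (map (\<lambda>i. b * act (fst i) (snd i)) L)) k
     = sum_list (map (\<lambda>i. act k (b * act (fst i) (snd i))) L)"
    by (simp add: dphi_def lin_sum_list[OF acth])
  also have "\<dots> = sum_list (map (\<lambda>i. sw (Delta k) (\<lambda>x y. act x b * act (y * fst i) (snd i))) L)"
    by (simp add: I1)
  also have "\<dots> = conv Delta (dphi act b) (rep L) k"
    by (simp add: conv_sw rep_def split_def dphi_def sum_list_mult_left sw_sum_list)
  finally show "conv Delta (dphi act b) (rep L) k = dphi act (sum_list (map (\<lambda>i. b * act (fst i) (snd i)) L)) k" ..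
qed

lemma ideal_right: "conv Delta (rep L) (dphi act b) = dphi act (sum_list (map (\<lambda>i. act (fst i) (snd i) * b) L))"
proof (rule ext)
  fix k
  have "dphi act (sum_list (map (\<lambda>i. act (fst i) (snd i) * b) L)) k
     = sum_list (map (\<lambda>i. act k (act (fst i) (snd i) * b)) L)"
    by (simp add: dphi_def lin_sum_list[OF acth])
  also have "\<dots> = sum_list (map (\<lambda>i. sw (Delta k) (\<lambda>x y. act (x * fst i) (snd i) * act y b)) L)"
    by (simp add: I2)
  also have "\<dots> = conv Delta (rep L) (dphi act b) k"
    by (simp add: conv_sw rep_def split_def dphi_def sum_list_mult_right sw_sum_list)
  finally show "conv Delta (rep L) (dphi act b) k = dphi act (sum_list (map (\<lambda>i. act (fst i) (snd i) * b) L)) k" ..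
qed

lemma dphi_mult: "dphi act (a * b) = conv Delta (dphi act a) (dphi act b)"
  by (rule ext) (simp add: conv_sw dphi_def P4)

lemma MA_fun: "lin sH sB f \<Longrightarrow> lin sH sB g \<Longrightarrow>
   hact h (conv Delta f g) = (\<lambda>k. sum_list (map (\<lambda>(x,y). conv Delta (hact x f) (hact y g) k) (Delta h)))"
  by (rule ext) (simp add: hact_def MA sw_def)

lemma idem: assumes "f \<in> Bbar sB act"
  shows "\<exists>ps. set ps \<subseteq> Bbar sB act \<times> Bbar sB act \<and>
        f = (\<lambda>k. sum_list (map (\<lambda>(g1,g2). conv Delta g1 g2 k) ps))"
proof -
  obtain L where L: "f = rep L" using Bbar_rep assms by blast
  define ps where "ps = concat (map (\<lambda>i. map (\<lambda>(x,y). (hact x (dphi act 1), hact y (dphi act (snd i)))) (Delta (fst i))) L)"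
  have set: "set ps \<subseteq> Bbar sB act \<times> Bbar sB act"
    unfolding ps_def by (auto intro!: Bbar.hmod Bbar.gen)
  have e: "sum_list (map (\<lambda>(g1,g2). conv Delta g1 g2 k) ps)
     = sum_list (map (\<lambda>i. sw (Delta (fst i)) (\<lambda>x y. conv Delta (hact x (dphi act 1)) (hact y (dphi act (snd i))) k)) L)" for k
    unfolding ps_def by (induction L) (simp_all add: sw_def split_def comp_def)
  have "rep L k = sum_list (map (\<lambda>(g1,g2). conv Delta g1 g2 k) ps)" for k
  proof -
    have "act (k * h) b = sw (Delta h) (\<lambda>x y. conv Delta (hact x (dphi act 1)) (hact y (dphi act b)) k)" for h b
    proof -
      have "act (k * h) b = conv Delta (dphi act 1) (dphi act b) (k * h)"
        using dphi_mult[of 1 b, symmetric] by (simp add: dphi_def)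
      also have "\<dots> = sw (Delta h) (\<lambda>x y. conv Delta (hact x (dphi act 1)) (hact y (dphi act b)) k)"
        by (rule MA[OF lin_dphi lin_dphi])
      finally show ?thesis .
    qed
    then show ?thesis unfolding e by (simp add: rep_def split_def)
  qed
  then show ?thesis using set L by blast
qed

end

theorem mainTheorem15:
  fixes sH :: "'k::field \<Rightarrow> 'h::ring_1 \<Rightarrow> 'h"
    and sB :: "'k \<Rightarrow> 'b::ring_1 \<Rightarrow> 'b"
    and Delta :: "'h \<Rightarrow> ('h \<times> 'h) list"
    and eps :: "'h \<Rightarrow> 'k" and S :: "'h \<Rightarrow> 'h"
    and act :: "'h \<Rightarrow> 'b \<Rightarrow> 'b"
  assumes H: "hopf_algebra sH Delta eps S"
    and B: "k_algebra sB"
    and P: "sym_partial_action sH sB Delta act"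
  shows
    \<comment> \<open>(1) \<overline>B is closed under convolution and is an idempotent H-module algebra\<close>
    "(\<forall>f\<in>Bbar sB act. \<forall>g\<in>Bbar sB act. conv Delta f g \<in> Bbar sB act)
   \<and> (\<forall>f\<in>Bbar sB act. \<forall>g\<in>Bbar sB act. \<forall>h\<in>Bbar sB act.
        conv Delta (conv Delta f g) h = conv Delta f (conv Delta g h))
   \<and> (\<forall>f\<in>Bbar sB act. \<forall>g\<in>Bbar sB act. \<forall>h\<in>Bbar sB act.
        conv Delta f (\<lambda>k. g k + h k) = (\<lambda>k. conv Delta f g k + conv Delta f h k)
      \<and> conv Delta (\<lambda>k. f k + g k) h = (\<lambda>k. conv Delta f h k + conv Delta g h k))
   \<and> (\<forall>f\<in>Bbar sB act. \<forall>g\<in>Bbar sB act. \<forall>c.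
        conv Delta (\<lambda>k. sB c (f k)) g = (\<lambda>k. sB c (conv Delta f g k))
      \<and> conv Delta f (\<lambda>k. sB c (g k)) = (\<lambda>k. sB c (conv Delta f g k)))
   \<and> (\<forall>h. \<forall>f\<in>Bbar sB act. \<forall>g\<in>Bbar sB act.
        hact h (conv Delta f g)
          = (\<lambda>k. sum_list (map (\<lambda>(x,y). conv Delta (hact x f) (hact y g) k) (Delta h))))
   \<and> (\<forall>f\<in>Bbar sB act. \<exists>ps. set ps \<subseteq> Bbar sB act \<times> Bbar sB act \<and>
        f = (\<lambda>k. sum_list (map (\<lambda>(g1,g2). conv Delta g1 g2 k) ps)))
    \<comment> \<open>(2) \<phi> is multiplicative\<close>
   \<and> (\<forall>a b. dphi act (a * b) = conv Delta (dphi act a) (dphi act b))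
    \<comment> \<open>(3) \<phi>(B) is an ideal of \<overline>B\<close>
   \<and> range (dphi act) \<subseteq> Bbar sB act
   \<and> (\<forall>b. \<forall>f\<in>Bbar sB act. conv Delta (dphi act b) f \<in> range (dphi act)
                         \<and> conv Delta f (dphi act b) \<in> range (dphi act))
    \<comment> \<open>consequently: globalization\<close>
   \<and> inj (dphi act)
   \<and> (\<forall>h b. dphi act (act h b) = conv Delta (dphi act 1) (hact h (dphi act b)))"
proof -
  interpret PA sH sB Delta eps S act using H B P by (rule PA.intro)
  have c1: "\<forall>f\<in>Bbar sB act. \<forall>g\<in>Bbar sB act. conv Delta f g \<in> Bbar sB act"
    using closure by blast
  have c2: "\<forall>f\<in>Bbar sB act. \<forall>g\<in>Bbar sB act. \<forall>h\<in>Bbar sB act.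
        conv Delta (conv Delta f g) h = conv Delta f (conv Delta g h)"
    using assoc Bbar_lin by blast
  have c3: "\<forall>f\<in>Bbar sB act. \<forall>g\<in>Bbar sB act. \<forall>h\<in>Bbar sB act.
        conv Delta f (\<lambda>k. g k + h k) = (\<lambda>k. conv Delta f g k + conv Delta f h k)
      \<and> conv Delta (\<lambda>k. f k + g k) h = (\<lambda>k. conv Delta f h k + conv Delta g h k)"
    by (simp add: conv_sw distrib_left distrib_right sw_addf)
  have c4: "\<forall>f\<in>Bbar sB act. \<forall>g\<in>Bbar sB act. \<forall>c.
        conv Delta (\<lambda>k. sB c (f k)) g = (\<lambda>k. sB c (conv Delta f g k))
      \<and> conv Delta f (\<lambda>k. sB c (g k)) = (\<lambda>k. sB c (conv Delta f g k))"
    by (simp add: conv_sw multB1[symmetric] multB2[symmetric] sw_scB)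
  have c5: "\<forall>h. \<forall>f\<in>Bbar sB act. \<forall>g\<in>Bbar sB act.
        hact h (conv Delta f g)
          = (\<lambda>k. sum_list (map (\<lambda>(x,y). conv Delta (hact x f) (hact y g) k) (Delta h)))"
    using MA_fun Bbar_lin by blast
  have c6: "\<forall>f\<in>Bbar sB act. \<exists>ps. set ps \<subseteq> Bbar sB act \<times> Bbar sB act \<and>
        f = (\<lambda>k. sum_list (map (\<lambda>(g1,g2). conv Delta g1 g2 k) ps))"
    using idem by blast
  have c7: "\<forall>a b. dphi act (a * b) = conv Delta (dphi act a) (dphi act b)"
    using dphi_mult by blast
  have c8: "range (dphi act) \<subseteq> Bbar sB act" using Bbar.gen by blast
  have c9: "\<forall>b. \<forall>f\<in>Bbar sB act. conv Delta (dphi act b) f \<in> range (dphi act)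
                         \<and> conv Delta f (dphi act b) \<in> range (dphi act)"
  proof (intro allI ballI)
    fix b f assume "f \<in> Bbar sB act"
    then obtain L where L: "f = rep L" using Bbar_rep by blast
    show "conv Delta (dphi act b) f \<in> range (dphi act) \<and> conv Delta f (dphi act b) \<in> range (dphi act)"
      unfolding L ideal_left ideal_right by blast
  qed
  have c10: "inj (dphi act)"
  proof (rule injI)
    fix a b assume "dphi act a = dphi act b"
    then have "dphi act a 1 = dphi act b 1" by simp
    then show "a = b" by (simp add: dphi_def act1)
  qed
  have c11: "\<forall>h b. dphi act (act h b) = conv Delta (dphi act 1) (hact h (dphi act b))"
    by (simp add: conv_dphi_hact)
  show ?thesis using c1 c2 c3 c4 c5 c6 c7 c8 c9 c10 c11 by blast
qed

end
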